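(* Let $d\ge1$ and let $\mu:\mathbb{R}^d\to(0,\infty)$ be a differentiable function localized to the unit ball such that $\sum_{a\in\mathbb{Z}^d}\mu(x-a)=1$ for all $x$ and $\mu(x)\ge c(1+|x|)^{-10d}$ for some $c>0$. Then there exists $C>0$ such that for every $A\subset\mathbb{Z}^d$ and every $1\le j\le d$, \[ |\partial_j\mu_A|\le C\,\mu_{\partial A}\quad\text{pointwise on }\mathbb{R}^d. \]
   Context: A bounded function $f$ on $\mathbb{R}^d$ is localized to the unit ball if there is a constant $C$ with $|f(x)|\le C$, $|f(x)|\le C|x|^{-10d}$ and $|\nabla f(x)|\le C|x|^{-10d-1}$. $H=\{h\in\mathbb{Z}^d:\max_i|h_i|\le1\}$, $A+H=\{a+h:a\in A,h\in H\}$, $\partial A=(A+H)\setminus A$. $\mu_a(x)=\mu(x-a)$ and $\mu_B=\sum_{b\in B}\mu_b$ for $B\subset\mathbb{Z}^d$. *)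

theory Defs
  imports "HOL-Analysis.Analysis"
begin

definition lattice :: "(real^'n) set" where
  "lattice = {a. \<forall>i. a $ i \<in> \<int>}"

definition Hcube :: "(real^'n) set" where
  "Hcube = {h \<in> lattice. \<forall>i. \<bar>h $ i\<bar> \<le> 1}"

definition plusH :: "(real^'n) set \<Rightarrow> (real^'n) set" where
  "plusH A = {a + h | a h. a \<in> A \<and> h \<in> Hcube}"

definition lbdry :: "(real^'n) set \<Rightarrow> (real^'n) set" where
  "lbdry A = plusH A - A"

definition muset :: "(real^'n \<Rightarrow> real) \<Rightarrow> (real^'n) set \<Rightarrow> real^'n \<Rightarrow> real" where
  "muset \<mu> B x = (\<Sum>\<^sub>\<infinity>b\<in>B. \<mu> (x - b))"

text \<open>Localized to the unit ball (for a differentiable f; the gradient norm is the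
operator norm of the Frechet derivative).\<close>
definition localized :: "(real^'n \<Rightarrow> real) \<Rightarrow> bool" where
  "localized f \<longleftrightarrow> (\<exists>C. \<forall>x.
      \<bar>f x\<bar> \<le> C \<and>
      (x \<noteq> 0 \<longrightarrow> \<bar>f x\<bar> \<le> C * norm x powr (- 10 * real CARD('n))) \<and>
      (x \<noteq> 0 \<longrightarrow> onorm (frechet_derivative f (at x)) \<le> C * norm x powr (- 10 * real CARD('n) - 1)))"

end

theory Submission
  imports Defs
begin

definition linf :: "real^'n \<Rightarrow> real" where
  "linf x = Max (range (\<lambda>k. \<bar>x$k\<bar>))"

lemma linf_ge: "\<bar>x$k\<bar> \<le> linf x"
  unfolding linf_def by (rule Max_ge) auto

lemma linf_attained: "\<exists>k. \<bar>x$k\<bar> = linf x"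
proof -
  have "linf x \<in> range (\<lambda>k. \<bar>x$k\<bar>)" unfolding linf_def by (rule Max_in) auto
  then show ?thesis by auto
qed

lemma linf_nonneg: "0 \<le> linf x"
  using linf_ge[of x] abs_ge_zero order_trans by blast

lemma linf_le: "(\<And>k. \<bar>x$k\<bar> \<le> b) \<Longrightarrow> linf x \<le> b"
  using linf_attained[of x] by metis

lemma linf_le_norm: "linf x \<le> norm x"
  using linf_attained[of x] component_le_norm_cart by metis

lemma norm_le_linf: "norm x \<le> real CARD('n) * linf (x::real^'n)"
proof -
  have "norm x \<le> sum (\<lambda>i. \<bar>x$i\<bar>) UNIV" by (rule norm_le_l1_cart)
  also have "\<dots> \<le> sum (\<lambda>i. linf x) (UNIV::'n set)" by (rule sum_mono) (rule linf_ge)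
  finally show ?thesis by simp
qed

lemma linf_triangle: "linf (x + y) \<le> linf x + linf y"
proof (rule linf_le)
  fix k
  have "\<bar>(x+y)$k\<bar> \<le> \<bar>x$k\<bar> + \<bar>y$k\<bar>" by simp
  also have "\<dots> \<le> linf x + linf y" by (intro add_mono linf_ge)
  finally show "\<bar>(x+y)$k\<bar> \<le> linf x + linf y" .
qed

lemma linf_minus_commute: "linf (x - y) = linf (y - x)"
proof -
  have "(\<lambda>k. \<bar>(x-y)$k\<bar>) = (\<lambda>k. \<bar>(y-x)$k\<bar>)" by (simp add: abs_minus_commute)
  then show ?thesis unfolding linf_def by (rule arg_cong)
qed

lemma linf_diff_triangle: "linf (x - z) \<le> linf (x - y) + linf (y - z)"
  using linf_triangle[of "x-y" "y-z"] by simp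

lemma linf_zero_iff: "linf x = 0 \<longleftrightarrow> x = 0"
proof
  assume "linf x = 0"
  then have "x$k = 0" for k using linf_ge[of x k] by simp
  then show "x = 0" by (simp add: vec_eq_iff)
next
  assume "x = 0" then show "linf x = 0" using linf_attained[of x] by auto
qed

lemma lattice_iff: "a \<in> lattice \<longleftrightarrow> (\<forall>i. a$i \<in> \<int>)"
  unfolding lattice_def by simp

lemma lattice_diff: "a \<in> lattice \<Longrightarrow> b \<in> lattice \<Longrightarrow> a - b \<in> lattice"
  unfolding lattice_def by auto

lemma lattice_add: "a \<in> lattice \<Longrightarrow> b \<in> lattice \<Longrightarrow> a + b \<in> lattice"
  unfolding lattice_def by auto

lemma lattice_zero: "0 \<in> lattice"
  unfolding lattice_def by auto

lemma linf_lattice_nat: "a \<in> lattice \<Longrightarrow> \<exists>n::nat. linf a = real n"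
proof -
  assume a: "a \<in> lattice"
  obtain k where k: "\<bar>a$k\<bar> = linf a" using linf_attained by blast
  from a have "a$k \<in> \<int>" unfolding lattice_def by auto
  then obtain m where "a$k = of_int m" by (auto elim: Ints_cases)
  then have "linf a = real (nat \<bar>m\<bar>)" using k by simp
  then show ?thesis by blast
qed

lemma round_step: "\<bar>c\<bar> \<le> 1 \<Longrightarrow> \<bar>round (u + c) - round u\<bar> \<le> (1::int)"
proof -
  assume c: "\<bar>c\<bar> \<le> 1"
  have "round (u + c) \<le> round (u + 1)" by (rule round_mono) (use c in auto)
  moreover have "round (u - 1) \<le> round (u + c)" by (rule round_mono) (use c in auto)
  moreover have "round (u + 1) = round u + 1" unfolding round_def
    using floor_add_int[of "u + 1/2" 1] by (simp add: add_ac)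
  moreover have "round (u - 1) = round u - 1" unfolding round_def
    using floor_add_int[of "u - 1 + 1/2" 1] by (simp add: algebra_simps)
  ultimately show ?thesis by linarith
qed

definition ray :: "real^'n \<Rightarrow> real^'n \<Rightarrow> nat \<Rightarrow> real^'n" where
  "ray p a r = p + (\<chi> k. real_of_int (round ((a-p)$k * real r / linf (a-p))))"

lemma ray_lattice: "p \<in> lattice \<Longrightarrow> ray p a r \<in> lattice"
  unfolding ray_def by (rule lattice_add) (auto simp: lattice_def)

lemma ray_0: "ray p a 0 = p"
  unfolding ray_def by (simp add: vec_eq_iff)

lemma ray_full:
  assumes "a \<in> lattice" "p \<in> lattice" "linf (a - p) = real s"
  shows "ray p a s = a"
proof (cases "s = 0")
  case True
  then have "a - p = 0" using assms(3) by (simp add: linf_zero_iff)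
  then have "a = p" by simp
  then show ?thesis by (simp add: ray_def vec_eq_iff)
next
  case False
  have "real_of_int (round ((a-p)$k * real s / linf (a-p))) = (a-p)$k" for k
  proof -
    have "(a-p)$k \<in> \<int>" using lattice_diff[OF assms(1,2)] unfolding lattice_def by blast
    then obtain m where m: "(a-p)$k = of_int m" by (auto elim: Ints_cases)
    have "(a-p)$k * real s / linf (a-p) = (a-p)$k" using False assms(3) by simp
    then show ?thesis using m by simp
  qed
  then show ?thesis unfolding ray_def by (simp add: vec_eq_iff)
qed

lemma ray_step: "linf (ray p a (Suc r) - ray p a r) \<le> 1"
proof (rule linf_le)
  fix k
  let ?s = "linf (a-p)"
  let ?x = "(a-p)$k"
  have c: "\<bar>?x / ?s\<bar> \<le> 1"
  proof (cases "?s = 0")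
    case False
    then have "?s > 0" using linf_nonneg[of "a-p"] by auto
    then show ?thesis using linf_ge[of "a-p" k] by (simp add: abs_div)
  qed simp
  have "?x * real (Suc r) / ?s = ?x * real r / ?s + ?x / ?s"
    by (simp only: of_nat_Suc distrib_left mult_1_right add_divide_distrib)
  then have "\<bar>round (?x * real (Suc r) / ?s) - round (?x * real r / ?s)\<bar> \<le> 1"
    using round_step[OF c] by simp
  then have "\<bar>real_of_int (round (?x * real (Suc r) / ?s)) - real_of_int (round (?x * real r / ?s))\<bar> \<le> 1"
    by linarith
  then show "\<bar>(ray p a (Suc r) - ray p a r)$k\<bar> \<le> 1" unfolding ray_def by simp
qed

lemma ray_coord:
  "\<bar>(a-p)$k * real r / linf (a-p) - (ray p a r - p)$k\<bar> \<le> 1/2"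
  unfolding ray_def using of_int_round_abs_le[of "(a-p)$k * real r / linf (a-p)"]
  by (simp add: abs_minus_commute)

lemma ray_minus: "(ray p a r - p)$k = real_of_int (round ((a-p)$k * real r / linf (a-p)))"
  unfolding ray_def by simp

lemma ray_level:
  assumes "linf (a - p) = real s" "r \<le> s"
  shows "linf (ray p a r - p) = real r"
proof (cases "s = 0")
  case True
  then have "r = 0" using assms(2) by simp
  then show ?thesis by (simp add: ray_0 linf_zero_iff)
next
  case False
  then have s: "linf (a-p) > 0" using assms by auto
  have le: "\<bar>(ray p a r - p)$k\<bar> \<le> real r" for k
  proof -
    let ?x = "(a-p)$k"
    have xs: "\<bar>?x\<bar> \<le> linf (a-p)" by (rule linf_ge)
    have "\<bar>?x * real r / linf (a-p)\<bar> = \<bar>?x\<bar> * (real r / linf (a-p))"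
      using s by (simp add: abs_mult abs_div)
    also have "\<dots> \<le> linf (a-p) * (real r / linf (a-p))"
      by (rule mult_right_mono[OF xs]) (use s in simp)
    also have "\<dots> = real r" using s by simp
    finally have b: "\<bar>?x * real r / linf (a-p)\<bar> \<le> real r" .
    have "round (?x * real r / linf (a-p)) \<le> round (real r)" by (rule round_mono) (use b in linarith)
    moreover have "round (- real r) \<le> round (?x * real r / linf (a-p))" by (rule round_mono) (use b in linarith)
    moreover have "round (real r) = int r" using round_of_int[of "int r"] by simp
    moreover have "round (- real r) = - int r" using round_of_int[of "- int r"] by simp
    ultimately have "\<bar>round (?x * real r / linf (a-p))\<bar> \<le> int r" by linarith
    then show ?thesis unfolding ray_minus by linarith
  qed
  obtain k where k: "\<bar>(a-p)$k\<bar> = linf (a-p)" using linf_attained by blast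
  have "(a-p)$k * real r / linf (a-p) = real r \<or> (a-p)$k * real r / linf (a-p) = - real r"
  proof (cases "(a-p)$k \<ge> 0")
    case True
    then have "(a-p)$k = linf (a-p)" using k by simp
    then show ?thesis using s by simp
  next
    case False
    then have "(a-p)$k = - linf (a-p)" using k by simp
    then show ?thesis using s by simp
  qed
  moreover have rr: "round (real r) = int r" using round_of_int[of "int r"] by simp
  moreover have rn: "round (- real r) = - int r" using round_of_int[of "- int r"] by simp
  ultimately have "\<bar>(ray p a r - p)$k\<bar> = real r" unfolding ray_minus by auto
  then have "real r \<le> linf (ray p a r - p)" using linf_ge by metis
  moreover have "linf (ray p a r - p) \<le> real r" by (rule linf_le) (rule le)
  ultimately show ?thesis by simp
qed

lemma card_int_interval:
  assumes "w \<ge> 0"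
  shows "finite {m::int. \<bar>real_of_int m - c\<bar> \<le> w} \<and> real (card {m::int. \<bar>real_of_int m - c\<bar> \<le> w}) \<le> 2*w + 1"
proof -
  let ?S = "{m::int. \<bar>real_of_int m - c\<bar> \<le> w}"
  have sub: "?S \<subseteq> {\<lceil>c - w\<rceil>..\<lfloor>c + w\<rfloor>}"
    by (auto simp: abs_le_iff ceiling_le_iff le_floor_iff)
  have fin: "finite ?S" using sub finite_subset by blast
  have "card ?S \<le> card {\<lceil>c - w\<rceil>..\<lfloor>c + w\<rfloor>}" by (rule card_mono[OF _ sub]) simp
  also have "\<dots> = nat (\<lfloor>c + w\<rfloor> + 1 - \<lceil>c - w\<rceil>)" by simp
  finally have "real (card ?S) \<le> real (nat (\<lfloor>c + w\<rfloor> + 1 - \<lceil>c - w\<rceil>))" by linarith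
  moreover have "real (nat (\<lfloor>c + w\<rfloor> + 1 - \<lceil>c - w\<rceil>)) \<le> 2*w + 1"
  proof (cases "\<lfloor>c + w\<rfloor> + 1 - \<lceil>c - w\<rceil> \<ge> 0")
    case True
    then have "real (nat (\<lfloor>c + w\<rfloor> + 1 - \<lceil>c - w\<rceil>)) = real_of_int \<lfloor>c + w\<rfloor> + 1 - real_of_int \<lceil>c - w\<rceil>"
      by simp
    moreover have "real_of_int \<lfloor>c + w\<rfloor> \<le> c + w" by (rule of_int_floor_le)
    moreover have "c - w \<le> real_of_int \<lceil>c - w\<rceil>" by (rule le_of_int_ceiling)
    ultimately show ?thesis by linarith
  next
    case False then show ?thesis using assms by simp
  qed
  ultimately show ?thesis using fin by linarith
qed

lemma width_bound:
  fixes n \<rho> :: nat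
  assumes "\<rho> \<le> n"
  shows "2 * (if \<rho> = 0 then real n else real n / (2 * real \<rho>)) + 1 \<le> 4 * (real n + 1) / (real \<rho> + 1)"
proof (cases "\<rho> = 0")
  case True then show ?thesis by simp
next
  case False
  then have r: "real \<rho> \<ge> 1" by simp
  have n: "real \<rho> \<le> real n" using assms by simp
  have h1: "real \<rho> * real \<rho> \<le> real n * real \<rho>" by (rule mult_right_mono[OF n]) simp
  have h2: "real n \<le> real n * real \<rho>" using r by (simp add: mult_le_cancel_left1)
  have "2 * (real n / (2 * real \<rho>)) + 1 = (real n + real \<rho>) / real \<rho>" using r by (simp add: field_simps)
  also have "\<dots> \<le> 4 * (real n + 1) / (real \<rho> + 1)"
  proof -
    have e1: "(real n + real \<rho>) * (real \<rho> + 1) = real n * real \<rho> + real n + real \<rho> * real \<rho> + real \<rho>"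
      by (simp add: algebra_simps)
    have e2: "4 * (real n + 1) * real \<rho> = 4 * (real n * real \<rho>) + 4 * real \<rho>" by (simp add: algebra_simps)
    have key: "(real n + real \<rho>) * (real \<rho> + 1) \<le> 4 * (real n + 1) * real \<rho>"
      unfolding e1 e2 using h1 h2 by linarith
    have "real n + real \<rho> \<le> 4 * (real n + 1) * real \<rho> / (real \<rho> + 1)"
      by (subst le_divide_eq) (use key in simp)
    then have "real n + real \<rho> \<le> 4 * (real n + 1) / (real \<rho> + 1) * real \<rho>" by simp
    then show ?thesis using r by (subst divide_le_eq) simp
  qed
  finally show ?thesis using False by simp
qed

lemma card_level:
  fixes p e :: "real^'n"
  assumes p: "p \<in> lattice" and er: "linf (e - p) = real \<rho>" and rn: "\<rho> \<le> n"
  defines "U \<equiv> {a \<in> lattice. linf (a - p) = real n \<and> ray p a \<rho> = e}"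
  shows "finite U \<and> real (card U) \<le> (4 * (real n + 1) / (real \<rho> + 1)) ^ CARD('n)"
proof -
  define w where "w = (if \<rho> = 0 then real n else real n / (2 * real \<rho>))"
  define c where "c = (\<lambda>k. if \<rho> = 0 then 0 else (e - p)$k * real n / real \<rho>)"
  define I where "I = (\<lambda>k::'n. {m::int. \<bar>real_of_int m - c k\<bar> \<le> w})"
  define B where "B = 4 * (real n + 1) / (real \<rho> + 1)"
  have w0: "w \<ge> 0" unfolding w_def by simp
  have finI: "finite (I k)" for k unfolding I_def using card_int_interval[OF w0] by blast
  have cardI: "real (card (I k)) \<le> B" for k
    using card_int_interval[OF w0, of "c k"] width_bound[OF rn] unfolding I_def B_def w_def by linarith
  define \<phi> where "\<phi> = (\<lambda>f::'n \<Rightarrow> int. p + (\<chi> k. real_of_int (f k)))"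
  have sub: "U \<subseteq> \<phi> ` (PiE UNIV I)"
  proof
    fix a assume aU: "a \<in> U"
    then have a: "a \<in> lattice" and an: "linf (a-p) = real n" and ae: "ray p a \<rho> = e" unfolding U_def by auto
    have int: "(a-p)$k \<in> \<int>" for k using lattice_diff[OF a p] unfolding lattice_def by blast
    define f where "f = (\<lambda>k. \<lfloor>(a-p)$k\<rfloor>)"
    have ff: "real_of_int (f k) = (a-p)$k" for k unfolding f_def using int[of k] by (auto elim: Ints_cases)
    have "a = \<phi> f" unfolding \<phi>_def using ff by (simp add: vec_eq_iff)
    moreover have "f \<in> PiE UNIV I"
    proof -
      have "f k \<in> I k" for k
      proof (cases "\<rho> = 0")
        case True
        have "\<bar>(a-p)$k\<bar> \<le> real n" using linf_ge an by metis
        then show ?thesis unfolding I_def c_def w_def using True ff by simp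
      next
        case False
        then have npos: "real n > 0" "real \<rho> > 0" using rn by auto
        have h: "\<bar>(a-p)$k * real \<rho> / real n - (e - p)$k\<bar> \<le> 1/2"
          using ray_coord[of a p k \<rho>] an ae by simp
        have "(a-p)$k - (e-p)$k * real n / real \<rho> = (real n / real \<rho>) * ((a-p)$k * real \<rho> / real n - (e - p)$k)"
          using npos by (simp add: field_simps)
        then have "\<bar>(a-p)$k - (e-p)$k * real n / real \<rho>\<bar> = (real n / real \<rho>) * \<bar>(a-p)$k * real \<rho> / real n - (e - p)$k\<bar>"
          using npos by (simp add: abs_mult)
        also have "\<dots> \<le> (real n / real \<rho>) * (1/2)" by (rule mult_left_mono[OF h]) (use npos in simp)
        finally show ?thesis unfolding I_def c_def w_def using False ff by simp
      qed
      then show ?thesis by auto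
    qed
    ultimately show "a \<in> \<phi> ` (PiE UNIV I)" by blast
  qed
  have finP: "finite (PiE UNIV I)" by (rule finite_PiE) (auto simp: finI)
  have finU: "finite U" using sub finP finite_subset by blast
  have "card U \<le> card (\<phi> ` (PiE UNIV I))" by (rule card_mono[OF _ sub]) (simp add: finP)
  also have "\<dots> \<le> card (PiE UNIV I)" by (rule card_image_le[OF finP])
  also have "\<dots> = (\<Prod>k\<in>UNIV. card (I k))" by (simp add: card_PiE)
  finally have "real (card U) \<le> (\<Prod>k\<in>UNIV. real (card (I k)))" by (metis of_nat_le_iff of_nat_prod)
  also have "\<dots> \<le> (\<Prod>k\<in>(UNIV::'n set). B)" by (rule prod_mono) (simp add: cardI)
  also have "\<dots> = B ^ CARD('n)" by simp
  finally show ?thesis using finU unfolding B_def by simp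
qed

lemma sum_inv_sq:
  assumes "m \<ge> (1::nat)"
  shows "(\<Sum>k\<in>{m..<m+j}. 1 / real k ^ 2) \<le> 2 / real m - 2 / real (m + j)"
proof (induction j)
  case 0 then show ?case by simp
next
  case (Suc j)
  let ?q = "real (m + j)"
  have q: "?q \<ge> 1" using assms by simp
  have "1 / ?q ^ 2 \<le> 2 / ?q - 2 / (?q + 1)"
    using q by (simp add: divide_simps power2_eq_square)
  then show ?case using Suc by (simp add: add.commute)
qed

lemma sum_inv_pow:
  assumes "m \<ge> (1::nat)" "\<beta> \<ge> 2"
  shows "(\<Sum>k\<in>{m..M}. 1 / real k ^ \<beta>) \<le> 2 / real m ^ (\<beta> - 1)"
proof -
  have mpos: "real m > 0" using assms by simp
  have "(\<Sum>k\<in>{m..M}. 1 / real k ^ \<beta>) \<le> (\<Sum>k\<in>{m..M}. (1 / real m ^ (\<beta> - 2)) * (1 / real k ^ 2))"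
  proof (rule sum_mono)
    fix k assume "k \<in> {m..M}"
    then have km: "real m \<le> real k" by simp
    have "real k ^ \<beta> = real k ^ (\<beta> - 2) * real k ^ 2" using assms(2)
      by (metis le_add_diff_inverse2 power_add)
    moreover have "real m ^ (\<beta> - 2) \<le> real k ^ (\<beta> - 2)" by (rule power_mono[OF km]) simp
    ultimately show "1 / real k ^ \<beta> \<le> (1 / real m ^ (\<beta> - 2)) * (1 / real k ^ 2)"
      using mpos km by (simp add: divide_simps mult_right_mono)
  qed
  also have "\<dots> = (1 / real m ^ (\<beta> - 2)) * (\<Sum>k\<in>{m..M}. 1 / real k ^ 2)"
    by (simp add: sum_distrib_left)
  also have "(\<Sum>k\<in>{m..M}. 1 / real k ^ 2) \<le> 2 / real m"
  proof (cases "m \<le> M")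
    case True
    then have e: "{m..M} = {m..<m + (M + 1 - m)}" by auto
    have "0 \<le> 2 / real (m + (M + 1 - m))" by simp
    then show ?thesis unfolding e using sum_inv_sq[OF assms(1), of "M + 1 - m"] by linarith
  next
    case False then show ?thesis using mpos by simp
  qed
  then have "(1 / real m ^ (\<beta> - 2)) * (\<Sum>k\<in>{m..M}. 1 / real k ^ 2) \<le> (1 / real m ^ (\<beta> - 2)) * (2 / real m)"
    by (rule mult_left_mono) simp
  also have "\<dots> = 2 / real m ^ (\<beta> - 1)"
  proof -
    have "real m ^ (\<beta> - 1) = real m ^ (\<beta> - 2) * real m" using assms(2)
      by (metis Suc_diff_Suc Suc_1 Suc_le_lessD diff_Suc_1 power_Suc2)
    then show ?thesis using mpos by simp
  qed
  finally show ?thesis .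
qed

lemma lev_exists:
  assumes "a \<in> lattice" "p \<in> lattice"
  shows "linf (a-p) = real (nat \<lfloor>linf (a-p)\<rfloor>)"
proof -
  obtain n where "linf (a-p) = real n" using linf_lattice_nat[OF lattice_diff[OF assms]] by blast
  then show ?thesis by simp
qed

lemma count_lemma:
  fixes p e :: "real^'n"
  assumes p: "p \<in> lattice" and e: "e \<in> lattice" and F: "finite F" "F \<subseteq> lattice"
    and N: "N \<ge> CARD('n) + 2"
  shows "(\<Sum>a\<in>{a\<in>F. \<exists>r. real r \<le> linf (a-p) \<and> ray p a r = e}. 1 / (1 + linf (a-p)) ^ N)
          \<le> 2 * 4 ^ CARD('n) / (1 + linf (e-p)) ^ (N - 1)"
proof -
  let ?d = "CARD('n)"
  obtain \<rho> where er: "linf (e-p) = real \<rho>" using linf_lattice_nat[OF lattice_diff[OF e p]] by blast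
  define lev where "lev = (\<lambda>a. nat \<lfloor>linf (a-p)\<rfloor>)"
  have levF: "linf (a-p) = real (lev a)" if "a \<in> lattice" for a
    unfolding lev_def using lev_exists[OF that p] .
  define T where "T = {a\<in>F. \<exists>r. real r \<le> linf (a-p) \<and> ray p a r = e}"
  have T: "a \<in> F \<and> \<rho> \<le> lev a \<and> ray p a \<rho> = e" if aT: "a \<in> T" for a
  proof -
    obtain r where aF: "a \<in> F" and r: "real r \<le> linf (a-p)" "ray p a r = e"
      using aT unfolding T_def by blast
    have al: "a \<in> lattice" using aF F by blast
    have rl: "r \<le> lev a" using r(1) levF[OF al] by simp
    have "linf (e - p) = real r" using ray_level[OF levF[OF al] rl] r(2) by simp
    then have "r = \<rho>" using er by simp
    then show ?thesis using aF rl r by simp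
  qed
  define M where "M = Max (insert \<rho> (lev ` F))"
  have finT: "finite T" unfolding T_def using F by simp
  have levT: "lev ` T \<subseteq> {\<rho>..M}"
  proof
    fix n assume "n \<in> lev ` T"
    then obtain a where a: "a \<in> T" "n = lev a" by blast
    have "lev a \<le> M" unfolding M_def by (rule Max_ge) (use F(1) T[OF a(1)] in auto)
    then show "n \<in> {\<rho>..M}" using T[OF a(1)] a(2) by simp
  qed
  let ?w = "\<lambda>a. 1 / (1 + linf (a-p)) ^ N"
  let ?K = "4 ^ ?d / (real \<rho> + 1) ^ ?d"
  have "(\<Sum>a\<in>T. ?w a) = (\<Sum>n\<in>{\<rho>..M}. \<Sum>a\<in>{a. a \<in> T \<and> lev a = n}. ?w a)"
    by (rule sum.group[symmetric, OF finT _ levT]) simp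
  also have "\<dots> \<le> (\<Sum>n\<in>{\<rho>..M}. (4 * (real n + 1) / (real \<rho> + 1)) ^ ?d / (1 + real n) ^ N)"
  proof (rule sum_mono)
    fix n assume n: "n \<in> {\<rho>..M}"
    define U where "U = {a \<in> lattice. linf (a - p) = real n \<and> ray p a \<rho> = e}"
    have cU: "finite U \<and> real (card U) \<le> (4 * (real n + 1) / (real \<rho> + 1)) ^ ?d"
      using card_level[OF p er, of n] n unfolding U_def by simp
    have sub: "{a. a \<in> T \<and> lev a = n} \<subseteq> U"
    proof
      fix a assume a: "a \<in> {a. a \<in> T \<and> lev a = n}"
      then have "a \<in> lattice" using T F by blast
      then show "a \<in> U" using a T levF unfolding U_def by auto
    qed
    have "(\<Sum>a\<in>{a. a \<in> T \<and> lev a = n}. ?w a) = (\<Sum>a\<in>{a. a \<in> T \<and> lev a = n}. 1 / (1 + real n) ^ N)"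
    proof (rule sum.cong[OF refl])
      fix a assume a: "a \<in> {a. a \<in> T \<and> lev a = n}"
      then have "a \<in> lattice" using T F by blast
      then show "?w a = 1 / (1 + real n) ^ N" using a levF by simp
    qed
    also have "\<dots> = real (card {a. a \<in> T \<and> lev a = n}) / (1 + real n) ^ N" by simp
    also have "\<dots> \<le> real (card U) / (1 + real n) ^ N"
    proof -
      have "card {a. a \<in> T \<and> lev a = n} \<le> card U" using card_mono cU sub by blast
      then show ?thesis by (intro divide_right_mono) auto
    qed
    also have "\<dots> \<le> (4 * (real n + 1) / (real \<rho> + 1)) ^ ?d / (1 + real n) ^ N"
      using cU by (intro divide_right_mono) auto
    finally show "(\<Sum>a\<in>{a. a \<in> T \<and> lev a = n}. ?w a) \<le> (4 * (real n + 1) / (real \<rho> + 1)) ^ ?d / (1 + real n) ^ N" .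
  qed
  also have "\<dots> = (\<Sum>n\<in>{\<rho>..M}. ?K * (1 / real (Suc n) ^ (N - ?d)))"
  proof (rule sum.cong[OF refl])
    fix n
    have pw: "(1 + real n) ^ N = real (Suc n) ^ ?d * real (Suc n) ^ (N - ?d)" using N
      by (simp add: power_add[symmetric] add.commute)
    have "(4 * (real n + 1) / (real \<rho> + 1)) ^ ?d = (4 * real (Suc n)) ^ ?d / (real \<rho> + 1) ^ ?d"
      by (simp add: power_divide add.commute)
    also have "\<dots> = ?K * real (Suc n) ^ ?d" by (simp only: power_mult_distrib) simp
    finally have "(4 * (real n + 1) / (real \<rho> + 1)) ^ ?d = ?K * real (Suc n) ^ ?d" .
    then show "(4 * (real n + 1) / (real \<rho> + 1)) ^ ?d / (1 + real n) ^ N = ?K * (1 / real (Suc n) ^ (N - ?d))"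
      unfolding pw by simp
  qed
  also have "\<dots> = ?K * (\<Sum>n\<in>{\<rho>..M}. 1 / real (Suc n) ^ (N - ?d))" by (simp add: sum_distrib_left)
  also have "(\<Sum>n\<in>{\<rho>..M}. 1 / real (Suc n) ^ (N - ?d)) = (\<Sum>k\<in>{Suc \<rho>..Suc M}. 1 / real k ^ (N - ?d))"
    by (rule sum.shift_bounds_cl_Suc_ivl[symmetric])
  also have "?K * \<dots> \<le> ?K * (2 / real (Suc \<rho>) ^ (N - ?d - 1))"
    by (rule mult_left_mono) (rule sum_inv_pow, use N in auto)
  also have "\<dots> = 2 * 4 ^ ?d / (1 + linf (e-p)) ^ (N - 1)"
  proof -
    have "real (Suc \<rho>) ^ (N - 1) = real (Suc \<rho>) ^ ?d * real (Suc \<rho>) ^ (N - ?d - 1)"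
      using N by (simp add: power_add[symmetric])
    then show ?thesis unfolding er by (simp add: add.commute)
  qed
  finally show ?thesis unfolding T_def .
qed

lemma lattice_sum_bound:
  fixes p :: "real^'n"
  assumes p: "p \<in> lattice" and F: "finite F" "F \<subseteq> lattice" and N: "N \<ge> CARD('n) + 2"
  shows "(\<Sum>a\<in>F. 1 / (1 + linf (a-p)) ^ N) \<le> 2 * 4 ^ CARD('n)"
proof -
  have "{a\<in>F. \<exists>r. real r \<le> linf (a-p) \<and> ray p a r = p} = F"
  proof (intro set_eqI iffI)
    fix a assume "a \<in> F"
    then show "a \<in> {a\<in>F. \<exists>r. real r \<le> linf (a-p) \<and> ray p a r = p}"
      using linf_nonneg[of "a-p"] ray_0[of p a] by (intro CollectI conjI exI[of _ 0]) auto
  qed auto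
  moreover have "linf (0::real^'n) = 0" by (simp add: linf_zero_iff)
  ultimately show ?thesis using count_lemma[OF p p F N] by simp
qed

lemma lattice_summable:
  fixes p :: "real^'n"
  assumes p: "p \<in> lattice" and S: "S \<subseteq> lattice" and N: "N \<ge> CARD('n) + 2"
  shows "(\<lambda>a. 1 / (1 + linf (a-p)) ^ N) summable_on S"
    and "(\<Sum>\<^sub>\<infinity>a\<in>S. 1 / (1 + linf (a-p)) ^ N) \<le> 2 * 4 ^ CARD('n)"
proof -
  have nn: "0 \<le> 1 / (1 + linf (a-p)) ^ N" for a using linf_nonneg[of "a-p"] by simp
  have bd: "sum (\<lambda>a. 1 / (1 + linf (a-p)) ^ N) F \<le> 2 * 4 ^ CARD('n)" if "finite F" "F \<subseteq> S" for F
    using lattice_sum_bound[OF p that(1) _ N] that(2) S by blast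
  show sm: "(\<lambda>a. 1 / (1 + linf (a-p)) ^ N) summable_on S"
    by (rule nonneg_bdd_above_summable_on) (use nn bd in \<open>auto intro!: bdd_aboveI2\<close>)
  show "(\<Sum>\<^sub>\<infinity>a\<in>S. 1 / (1 + linf (a-p)) ^ N) \<le> 2 * 4 ^ CARD('n)"
    by (rule infsum_le_finite_sums[OF sm]) (use bd in auto)
qed

lemma iso_lemma:
  fixes B E :: "(real^'n) set"
  assumes B: "B \<subseteq> lattice" and E: "E \<subseteq> lattice" and p: "p \<in> lattice" "p \<notin> B"
    and nb: "\<And>u v. u \<in> lattice \<Longrightarrow> v \<in> lattice \<Longrightarrow> u \<notin> B \<Longrightarrow> v \<in> B \<Longrightarrow> linf (u - v) \<le> 1 \<Longrightarrow> u \<in> E \<or> v \<in> E"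
    and N: "N \<ge> CARD('n) + 3"
  shows "(\<Sum>\<^sub>\<infinity>a\<in>B. 1 / (1 + linf (a-p)) ^ N) \<le> 2 * 4 ^ CARD('n) * (\<Sum>\<^sub>\<infinity>e\<in>E. 1 / (1 + linf (e-p)) ^ (N - 1))"
proof -
  let ?w = "\<lambda>a. 1 / (1 + linf (a-p)) ^ N"
  let ?v = "\<lambda>a. 1 / (1 + linf (a-p)) ^ (N - 1)"
  have ex: "\<exists>e. e \<in> E \<and> (\<exists>r. real r \<le> linf (a-p) \<and> ray p a r = e)" if a: "a \<in> B" for a
  proof -
    have al: "a \<in> lattice" using a B by blast
    obtain s where s: "linf (a-p) = real s" using linf_lattice_nat[OF lattice_diff[OF al p(1)]] by blast
    let ?P = "\<lambda>r. ray p a r \<in> B"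
    have Ps: "?P s" using ray_full[OF al p(1) s] a by simp
    have P0: "\<not> ?P 0" using p(2) by (simp add: ray_0)
    define r0 where "r0 = (LEAST r. ?P r)"
    have Pr0: "?P r0" unfolding r0_def by (rule LeastI[of _ s]) (rule Ps)
    have r0s: "r0 \<le> s" unfolding r0_def by (rule Least_le) (rule Ps)
    have "r0 \<noteq> 0"
    proof
      assume "r0 = 0" then show False using Pr0 P0 by simp
    qed
    then obtain q where q: "r0 = Suc q" by (cases r0) auto
    have nPq: "\<not> ?P q" using not_less_Least[of q ?P] q unfolding r0_def by auto
    have "linf (ray p a q - ray p a (Suc q)) \<le> 1" using ray_step[of p a q] linf_minus_commute by metis
    then have "ray p a q \<in> E \<or> ray p a (Suc q) \<in> E"
      using nb[OF ray_lattice[OF p(1)] ray_lattice[OF p(1)] nPq] Pr0 q by auto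
    moreover have "real q \<le> linf (a-p)" "real (Suc q) \<le> linf (a-p)" using r0s q s by auto
    ultimately show ?thesis by blast
  qed
  then obtain ef where ef: "\<And>a. a \<in> B \<Longrightarrow> ef a \<in> E \<and> (\<exists>r. real r \<le> linf (a-p) \<and> ray p a r = ef a)"
    by metis
  have N2: "N \<ge> CARD('n) + 2" "N - 1 \<ge> CARD('n) + 2" using N by auto
  have smB: "?w summable_on B" by (rule lattice_summable(1)[OF p(1) B N2(1)])
  have smE: "?v summable_on E" by (rule lattice_summable(1)[OF p(1) E N2(2)])
  have wnn: "0 \<le> ?w a" for a using linf_nonneg[of "a-p"] by simp
  have vnn: "0 \<le> ?v a" for a using linf_nonneg[of "a-p"] by simp
  show ?thesis
  proof (rule infsum_le_finite_sums[OF smB])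
    fix F assume F: "finite F" "F \<subseteq> B"
    have FL: "F \<subseteq> lattice" using F B by blast
    have fin: "finite (ef ` F)" using F by simp
    have "(\<Sum>a\<in>F. ?w a) = (\<Sum>e\<in>ef ` F. \<Sum>a\<in>{a. a \<in> F \<and> ef a = e}. ?w a)"
      by (rule sum.group[symmetric, OF F(1) fin]) simp
    also have "\<dots> \<le> (\<Sum>e\<in>ef ` F. \<Sum>a\<in>{a\<in>F. \<exists>r. real r \<le> linf (a-p) \<and> ray p a r = e}. ?w a)"
    proof (rule sum_mono)
      fix e assume e: "e \<in> ef ` F"
      show "(\<Sum>a\<in>{a. a \<in> F \<and> ef a = e}. ?w a) \<le> (\<Sum>a\<in>{a\<in>F. \<exists>r. real r \<le> linf (a-p) \<and> ray p a r = e}. ?w a)"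
        by (rule sum_mono2) (use F ef wnn in auto)
    qed
    also have "\<dots> \<le> (\<Sum>e\<in>ef ` F. 2 * 4 ^ CARD('n) * ?v e)"
    proof (rule sum_mono)
      fix e assume e: "e \<in> ef ` F"
      then have "e \<in> lattice" using ef F E by blast
      then show "(\<Sum>a\<in>{a\<in>F. \<exists>r. real r \<le> linf (a-p) \<and> ray p a r = e}. ?w a) \<le> 2 * 4 ^ CARD('n) * ?v e"
        using count_lemma[OF p(1) _ F(1) FL N2(1)] by simp
    qed
    also have "\<dots> = 2 * 4 ^ CARD('n) * (\<Sum>e\<in>ef ` F. ?v e)" by (simp add: sum_distrib_left)
    also have "\<dots> \<le> 2 * 4 ^ CARD('n) * (\<Sum>\<^sub>\<infinity>e\<in>E. ?v e)"
      by (rule mult_left_mono) (rule finite_sum_le_infsum[OF smE fin], use ef F vnn in auto)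
    finally show "(\<Sum>a\<in>F. ?w a) \<le> 2 * 4 ^ CARD('n) * (\<Sum>\<^sub>\<infinity>e\<in>E. ?v e)" .
  qed
qed

lemma real_summable_dom:
  fixes f M :: "'a \<Rightarrow> real"
  assumes "M summable_on S" "\<And>a. a \<in> S \<Longrightarrow> \<bar>f a\<bar> \<le> M a"
  shows "f summable_on S" and "\<bar>infsum f S\<bar> \<le> infsum M S"
proof -
  have Mnn: "0 \<le> M a" if "a \<in> S" for a using assms(2)[OF that] by linarith
  have "(\<lambda>a. norm (M a)) summable_on S"
    using assms(1) by (rule summable_on_cong[THEN iffD1, rotated]) (use Mnn in simp)
  then have "Infinite_Sum.abs_summable_on M S" by simp
  then have "Infinite_Sum.abs_summable_on f S"
    by (rule Infinite_Sum.abs_summable_on_comparison_test) (use assms(2) in \<open>auto intro: order_trans[OF _ abs_ge_self]\<close>)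
  then show sf: "f summable_on S" by (rule Infinite_Sum.abs_summable_summable)
  show "\<bar>infsum f S\<bar> \<le> infsum M S"
    using norm_infsum_le[OF has_sum_infsum[OF sf] has_sum_infsum[OF assms(1)]] assms(2) by simp
qed

lemma infsum_split_finite:
  fixes f :: "'a \<Rightarrow> real"
  assumes "f summable_on S" "finite F0" "F0 \<subseteq> S"
  shows "infsum f S = sum f F0 + infsum f (S - F0)"
proof -
  have smR: "f summable_on (S - F0)" by (rule summable_on_subset_banach[OF assms(1)]) auto
  have "infsum f (F0 \<union> (S - F0)) = infsum f F0 + infsum f (S - F0)"
    by (rule infsum_Un_disjoint) (use smR assms(2) in auto)
  moreover have "F0 \<union> (S - F0) = S" using assms(3) by auto
  ultimately show ?thesis using assms(2) by simp
qed

lemma infsum_dominated: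
  fixes h :: "'b \<Rightarrow> 'a \<Rightarrow> real"
  assumes smM: "M summable_on S"
    and ev: "eventually (\<lambda>t. \<forall>a\<in>S. \<bar>h t a\<bar> \<le> M a) F"
    and lim: "\<And>a. a \<in> S \<Longrightarrow> ((\<lambda>t. h t a) \<longlongrightarrow> l a) F"
    and nb: "F \<noteq> bot"
  shows "((\<lambda>t. \<Sum>\<^sub>\<infinity>a\<in>S. h t a) \<longlongrightarrow> (\<Sum>\<^sub>\<infinity>a\<in>S. l a)) F"
proof -
  have lM: "\<bar>l a\<bar> \<le> M a" if a: "a \<in> S" for a
  proof (rule tendsto_upperbound[OF tendsto_rabs[OF lim[OF a]] _ nb])
    show "\<forall>\<^sub>F t in F. \<bar>h t a\<bar> \<le> M a" using ev by eventually_elim (use a in auto)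
  qed
  have sml: "l summable_on S" using real_summable_dom[OF smM lM] by blast
  show ?thesis
  proof (rule tendstoI)
    fix \<epsilon> :: real assume \<epsilon>: "\<epsilon> > 0"
    obtain F0 where F0: "finite F0" "F0 \<subseteq> S" "dist (sum M F0) (infsum M S) \<le> \<epsilon>/8"
      using infsum_finite_approximation[OF smM, of "\<epsilon>/8"] \<epsilon> by auto
    let ?R = "S - F0"
    have smR: "M summable_on ?R" by (rule summable_on_subset_banach[OF smM]) auto
    have "infsum M ?R \<le> \<epsilon>/8" using infsum_split_finite[OF smM F0(1,2)] F0(3) by (simp add: dist_real_def)
    have tail: "infsum M ?R \<le> \<epsilon>/8"
      using infsum_split_finite[OF smM F0(1,2)] F0(3) by (simp add: dist_real_def)
    have lR: "\<bar>infsum l ?R\<bar> \<le> \<epsilon>/8"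
      using real_summable_dom(2)[OF smR, of l] lM tail by force
    have ev1: "eventually (\<lambda>t. dist (sum (h t) F0) (sum l F0) < \<epsilon>/2) F"
      using tendstoD[OF tendsto_sum[of F0 "\<lambda>a t. h t a" l F], of "\<epsilon>/2"] lim F0(2) \<epsilon> by auto
    show "eventually (\<lambda>t. dist (\<Sum>\<^sub>\<infinity>a\<in>S. h t a) (\<Sum>\<^sub>\<infinity>a\<in>S. l a) < \<epsilon>) F"
      using ev ev1
    proof eventually_elim
      case (elim t)
      have smh: "h t summable_on S" using real_summable_dom(1)[OF smM, of "h t"] elim(1) by blast
      have hR: "\<bar>infsum (h t) ?R\<bar> \<le> \<epsilon>/8"
        using real_summable_dom(2)[OF smR, of "h t"] elim(1) tail by force
      have "infsum (h t) S = sum (h t) F0 + infsum (h t) ?R" by (rule infsum_split_finite[OF smh F0(1,2)])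
      moreover have "infsum l S = sum l F0 + infsum l ?R" by (rule infsum_split_finite[OF sml F0(1,2)])
      ultimately have "infsum (h t) S - infsum l S = (sum (h t) F0 - sum l F0) + infsum (h t) ?R - infsum l ?R"
        by simp
      moreover have "\<And>x y z::real. \<bar>x + y - z\<bar> \<le> \<bar>x\<bar> + \<bar>y\<bar> + \<bar>z\<bar>" by arith
      ultimately have "\<bar>infsum (h t) S - infsum l S\<bar> \<le> \<bar>sum (h t) F0 - sum l F0\<bar> + \<bar>infsum (h t) ?R\<bar> + \<bar>infsum l ?R\<bar>"
        by metis
      then show ?case using elim(2) hR lR \<epsilon> unfolding dist_real_def by linarith
    qed
  qed
qed

lemma dir_deriv:
  fixes f :: "real^'n \<Rightarrow> real"
  assumes diff: "\<And>x. f differentiable (at x)"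
  shows "((\<lambda>t. f (y + t *\<^sub>R v)) has_real_derivative (frechet_derivative f (at (y + t0 *\<^sub>R v)) v)) (at t0)"
proof -
  let ?z = "y + t0 *\<^sub>R v"
  let ?D = "frechet_derivative f (at ?z)"
  have d1: "((\<lambda>t. y + t *\<^sub>R v) has_derivative (\<lambda>h. h *\<^sub>R v)) (at t0)"
    by (auto intro!: derivative_eq_intros)
  have d2: "(f has_derivative ?D) (at ?z)" using diff frechet_derivative_works by blast
  have bl: "linear ?D" using has_derivative_linear[OF d2] .
  have "((f \<circ> (\<lambda>t. y + t *\<^sub>R v)) has_derivative (?D \<circ> (\<lambda>h. h *\<^sub>R v))) (at t0)"
    by (rule diff_chain_at[OF d1]) (use d2 in simp)
  moreover have "(?D \<circ> (\<lambda>h. h *\<^sub>R v)) = (\<lambda>h. ?D v * h)"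
    using linear_scale[OF bl] by (auto simp: fun_eq_iff mult.commute)
  ultimately show ?thesis unfolding has_field_derivative_def by (simp add: o_def)
qed

lemma termwise:
  fixes \<mu> :: "real^'n \<Rightarrow> real"
  assumes diff: "\<And>x. \<mu> differentiable (at x)"
    and sm: "\<And>t. \<bar>t\<bar> \<le> \<delta> \<Longrightarrow> (\<lambda>a. \<mu> (y + t *\<^sub>R v - a)) summable_on S"
    and \<delta>: "\<delta> > 0"
    and bnd: "\<And>a t. a \<in> S \<Longrightarrow> \<bar>t\<bar> \<le> \<delta> \<Longrightarrow> \<bar>frechet_derivative \<mu> (at (y + t *\<^sub>R v - a)) v\<bar> \<le> M a"
    and smM: "M summable_on S"
  shows "((\<lambda>t. \<Sum>\<^sub>\<infinity>a\<in>S. \<mu> (y + t *\<^sub>R v - a)) has_real_derivative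
           (\<Sum>\<^sub>\<infinity>a\<in>S. frechet_derivative \<mu> (at (y - a)) v)) (at 0)"
proof -
  let ?fd = "\<lambda>z. frechet_derivative \<mu> (at z) v"
  define \<phi> where "\<phi> = (\<lambda>a t. \<mu> (y + t *\<^sub>R v - a))"
  have eq: "y + t *\<^sub>R v - a = (y - a) + t *\<^sub>R v" for t a by (simp add: algebra_simps)
  have der: "(\<phi> a has_real_derivative ?fd (y + t *\<^sub>R v - a)) (at t)" for a t
    using dir_deriv[OF diff, of "y - a" v t] unfolding \<phi>_def eq .
  have lip: "\<bar>\<phi> a t - \<phi> a 0\<bar> \<le> M a * \<bar>t\<bar>" if a: "a \<in> S" and t: "\<bar>t\<bar> \<le> \<delta>" for a t
  proof -
    have "norm (\<phi> a t - \<phi> a 0) \<le> M a * norm (t - 0)"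
    proof (rule field_differentiable_bound[where f'="\<lambda>z. ?fd (y + z *\<^sub>R v - a)" and S="{-\<delta>..\<delta>}"])
      show "convex {-\<delta>..\<delta>}" by simp
      show "(\<phi> a has_field_derivative ?fd (y + z *\<^sub>R v - a)) (at z within {-\<delta>..\<delta>})" for z
        using der has_field_derivative_at_within by blast
      show "norm (?fd (y + z *\<^sub>R v - a)) \<le> M a" if "z \<in> {-\<delta>..\<delta>}" for z
        using bnd[OF a] that by auto
      show "t \<in> {-\<delta>..\<delta>}" using t by auto
      show "0 \<in> {-\<delta>..\<delta>}" using \<delta> by auto
    qed
    then show ?thesis by simp
  qed
  define h where "h = (\<lambda>t a. (\<phi> a t - \<phi> a 0) / t)"
  have hlim: "((\<lambda>t. h t a) \<longlongrightarrow> ?fd (y - a)) (at 0)" for a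
    using der[of a 0] unfolding has_field_derivative_iff h_def by simp
  have evt: "eventually (\<lambda>t. t \<noteq> 0 \<and> \<bar>t\<bar> \<le> \<delta>) (at (0::real))"
    using \<delta> by (auto simp: eventually_at dist_real_def intro!: exI[of _ \<delta>])
  have evb: "eventually (\<lambda>t. \<forall>a\<in>S. \<bar>h t a\<bar> \<le> M a) (at (0::real))"
    using evt
  proof eventually_elim
    case (elim t)
    show ?case
    proof
      fix a assume a: "a \<in> S"
      have "\<bar>h t a\<bar> = \<bar>\<phi> a t - \<phi> a 0\<bar> / \<bar>t\<bar>" unfolding h_def by (simp add: abs_div)
      also have "\<dots> \<le> M a" using lip[OF a] elim by (simp add: divide_le_eq)
      finally show "\<bar>h t a\<bar> \<le> M a" .
    qed
  qed
  have lim: "((\<lambda>t. \<Sum>\<^sub>\<infinity>a\<in>S. h t a) \<longlongrightarrow> (\<Sum>\<^sub>\<infinity>a\<in>S. ?fd (y - a))) (at 0)"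
    by (rule infsum_dominated[OF smM evb hlim]) simp
  have evq: "eventually (\<lambda>t. (\<Sum>\<^sub>\<infinity>a\<in>S. h t a) =
     ((\<Sum>\<^sub>\<infinity>a\<in>S. \<phi> a t) - (\<Sum>\<^sub>\<infinity>a\<in>S. \<phi> a 0)) / (t - 0)) (at (0::real))"
    using evt
  proof eventually_elim
    case (elim t)
    have s1: "(\<lambda>a. \<phi> a t) summable_on S" using sm elim unfolding \<phi>_def by simp
    have s0: "(\<lambda>a. - \<phi> a 0) summable_on S" using sm[of 0] \<delta> unfolding \<phi>_def
      by (simp add: summable_on_uminus)
    have "(\<Sum>\<^sub>\<infinity>a\<in>S. h t a) = (\<Sum>\<^sub>\<infinity>a\<in>S. (\<phi> a t + - \<phi> a 0) * (1 / t))"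
      unfolding h_def by simp
    also have "\<dots> = (\<Sum>\<^sub>\<infinity>a\<in>S. \<phi> a t + - \<phi> a 0) * (1 / t)" by (rule infsum_cmult_left')
    also have "(\<Sum>\<^sub>\<infinity>a\<in>S. \<phi> a t + - \<phi> a 0) = (\<Sum>\<^sub>\<infinity>a\<in>S. \<phi> a t) + (\<Sum>\<^sub>\<infinity>a\<in>S. - \<phi> a 0)"
      by (rule infsum_add[OF s1 s0])
    finally show ?case by (simp add: infsum_uminus)
  qed
  have "((\<lambda>t. ((\<Sum>\<^sub>\<infinity>a\<in>S. \<phi> a t) - (\<Sum>\<^sub>\<infinity>a\<in>S. \<phi> a 0)) / (t - 0)) \<longlongrightarrow> (\<Sum>\<^sub>\<infinity>a\<in>S. ?fd (y - a))) (at 0)"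
    by (rule Lim_transform_eventually[OF lim evq])
  then show ?thesis unfolding has_field_derivative_iff \<phi>_def by simp
qed

lemma card_pos: "CARD('n::finite) \<ge> 1"
  using finite_UNIV_card_ge_0[where 'a='n] by simp

lemma fd_axis_bound:
  fixes \<mu> :: "real^'n \<Rightarrow> real"
  assumes diff: "\<And>x. \<mu> differentiable (at x)"
  shows "\<bar>frechet_derivative \<mu> (at z) (axis j 1)\<bar> \<le> onorm (frechet_derivative \<mu> (at z))"
proof -
  have "(\<mu> has_derivative frechet_derivative \<mu> (at z)) (at z)" using diff frechet_derivative_works by blast
  then have bl: "bounded_linear (frechet_derivative \<mu> (at z))" by (rule has_derivative_bounded_linear)
  have "norm (frechet_derivative \<mu> (at z) (axis j 1)) \<le> onorm (frechet_derivative \<mu> (at z)) * norm (axis j (1::real))"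
    by (rule onorm[OF bl])
  then show ?thesis by (simp add: norm_axis_1)
qed

lemma grad_far:
  fixes \<mu> :: "real^'n \<Rightarrow> real"
  assumes diff: "\<And>x. \<mu> differentiable (at x)"
    and C0: "\<And>x. x \<noteq> 0 \<Longrightarrow> onorm (frechet_derivative \<mu> (at x)) \<le> C0 * norm x powr (- 10 * real CARD('n) - 1)"
    and C0nn: "0 \<le> C0"
    and z: "norm z \<ge> 1/4"
  shows "\<bar>frechet_derivative \<mu> (at z) (axis j 1)\<bar> \<le> C0 * 5 ^ (10 * CARD('n) + 1) / (1 + norm z) ^ (10 * CARD('n) + 1)"
proof -
  let ?N = "10 * CARD('n) + 1"
  have zpos: "norm z > 0" using z by linarith
  then have z0: "z \<noteq> 0" by (metis norm_zero less_irrefl)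
  have e: "- 10 * real CARD('n) - 1 = - real ?N" by simp
  have "norm z powr (- 10 * real CARD('n) - 1) = norm z powr (- real ?N)" by (simp only: e)
  also have "\<dots> = inverse (norm z powr real ?N)" by (rule powr_minus)
  also have "norm z powr real ?N = norm z ^ ?N" by (rule powr_realpow[OF zpos])
  finally have "norm z powr (- 10 * real CARD('n) - 1) = 1 / norm z ^ ?N" by (simp add: divide_inverse)
  moreover have "1 / norm z ^ ?N \<le> 5 ^ ?N / (1 + norm z) ^ ?N"
  proof -
    have "(1 + norm z) ^ ?N \<le> (5 * norm z) ^ ?N" by (rule power_mono) (use z in auto)
    then have "(1 + norm z) ^ ?N \<le> 5 ^ ?N * norm z ^ ?N" by (simp only: power_mult_distrib)
    then have h: "(1 + norm z) ^ ?N \<le> 5 ^ ?N * norm z ^ ?N" .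
    have "1 / norm z ^ ?N = 5 ^ ?N / (5 ^ ?N * norm z ^ ?N)" using zpos by simp
    also have "\<dots> \<le> 5 ^ ?N / (1 + norm z) ^ ?N"
    proof -
      have p1: "0 < 5 ^ ?N * norm z ^ ?N" using zpos by simp
      have p2: "0 < (1 + norm z) ^ ?N" by (rule zero_less_power) (use zpos in linarith)
      show ?thesis by (rule divide_left_mono[OF h _ mult_pos_pos[OF p1 p2]]) simp
    qed
    finally show ?thesis .
  qed
  ultimately have "norm z powr (- 10 * real CARD('n) - 1) \<le> 5 ^ ?N / (1 + norm z) ^ ?N" by simp
  then have "C0 * norm z powr (- 10 * real CARD('n) - 1) \<le> C0 * (5 ^ ?N / (1 + norm z) ^ ?N)"
    by (rule mult_left_mono) (rule C0nn)
  then have "onorm (frechet_derivative \<mu> (at z)) \<le> C0 * (5 ^ ?N / (1 + norm z) ^ ?N)"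
    using C0[OF z0] by linarith
  then show ?thesis using fd_axis_bound[OF diff, of z j] by simp
qed

lemma wsum:
  fixes p :: "real^'n"
  assumes p: "p \<in> lattice" and S: "S \<subseteq> lattice" and N: "N \<ge> CARD('n) + 2" and Cst: "Cst \<ge> 0"
  shows "(\<lambda>a. Cst / (1 + linf (a-p)) ^ N) summable_on S"
    and "(\<Sum>\<^sub>\<infinity>a\<in>S. Cst / (1 + linf (a-p)) ^ N) \<le> Cst * (2 * 4 ^ CARD('n))"
proof -
  have e: "(\<lambda>a. Cst / (1 + linf (a-p)) ^ N) = (\<lambda>a. Cst * (1 / (1 + linf (a-p)) ^ N))" by simp
  show "(\<lambda>a. Cst / (1 + linf (a-p)) ^ N) summable_on S"
    unfolding e by (rule summable_on_cmult_right[OF lattice_summable(1)[OF p S N]])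
  have "(\<Sum>\<^sub>\<infinity>a\<in>S. Cst * (1 / (1 + linf (a-p)) ^ N)) = Cst * (\<Sum>\<^sub>\<infinity>a\<in>S. 1 / (1 + linf (a-p)) ^ N)"
    by (rule infsum_cmult_right')
  also have "\<dots> \<le> Cst * (2 * 4 ^ CARD('n))"
    by (rule mult_left_mono[OF lattice_summable(2)[OF p S N] Cst])
  finally show "(\<Sum>\<^sub>\<infinity>a\<in>S. Cst / (1 + linf (a-p)) ^ N) \<le> Cst * (2 * 4 ^ CARD('n))" unfolding e .
qed

lemma lattice_nonzero_norm:
  assumes "a \<in> lattice" "a \<noteq> 0"
  shows "norm a \<ge> 1"
proof -
  obtain k where k: "a$k \<noteq> 0" using assms(2) by (auto simp: vec_eq_iff)
  obtain m where m: "a$k = of_int m" using assms(1) unfolding lattice_def by (auto elim: Ints_cases)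
  then have "m \<noteq> 0" using k by auto
  then have "\<bar>a$k\<bar> \<ge> 1" using m by linarith
  then show ?thesis using component_le_norm_cart[of a k] by linarith
qed

lemma norm_axis_scale: "norm (t *\<^sub>R axis j (1::real)) = \<bar>t\<bar>"
  by (simp add: norm_axis_1)

lemma pou_split:
  fixes \<mu> :: "real^'n \<Rightarrow> real"
  assumes pou: "\<And>x. ((\<lambda>a. \<mu> (x - a)) has_sum 1) lattice"
  shows "\<mu> w = 1 - (\<Sum>\<^sub>\<infinity>a\<in>lattice - {0}. \<mu> (w - a))"
proof -
  have sm: "(\<lambda>a. \<mu> (w - a)) summable_on (lattice - {0})"
    using summable_on_subset_banach[OF has_sum_imp_summable[OF pou[of w]]] by blast
  have e: "insert 0 (lattice - {0}) = lattice" using lattice_zero by auto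
  have n0: "0 \<notin> lattice - {0}" by simp
  have "(\<Sum>\<^sub>\<infinity>a\<in>lattice. \<mu> (w - a)) = (\<Sum>\<^sub>\<infinity>a\<in>insert 0 (lattice - {0}). \<mu> (w - a))"
    by (subst e) (rule refl)
  also have "\<dots> = \<mu> (w - 0) + (\<Sum>\<^sub>\<infinity>a\<in>lattice - {0}. \<mu> (w - a))"
    by (rule infsum_insert[OF sm n0])
  finally have "(\<Sum>\<^sub>\<infinity>a\<in>lattice. \<mu> (w - a)) = \<mu> (w - 0) + (\<Sum>\<^sub>\<infinity>a\<in>lattice - {0}. \<mu> (w - a))" .
  moreover have "(\<Sum>\<^sub>\<infinity>a\<in>lattice. \<mu> (w - a)) = 1" using pou[of w] by (rule infsumI)
  ultimately show ?thesis by simp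
qed

lemma grad_bound:
  fixes \<mu> :: "real^'n \<Rightarrow> real"
  assumes diff: "\<And>x. \<mu> differentiable (at x)"
    and pou: "\<And>x. ((\<lambda>a. \<mu> (x - a)) has_sum 1) lattice"
    and C0: "\<And>x. x \<noteq> 0 \<Longrightarrow> onorm (frechet_derivative \<mu> (at x)) \<le> C0 * norm x powr (- 10 * real CARD('n) - 1)"
    and C0nn: "0 \<le> C0"
  shows "\<exists>K>0. \<forall>j z. \<bar>frechet_derivative \<mu> (at z) (axis j 1)\<bar> \<le> K / (1 + norm z) ^ (10 * CARD('n) + 1)"
proof -
  let ?N = "10 * CARD('n) + 1"
  let ?fd = "\<lambda>z. frechet_derivative \<mu> (at z)"
  have N2: "?N \<ge> CARD('n) + 2" using card_pos[where 'n='n] by simp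
  define c1 where "c1 = C0 * 5 ^ ?N * (8/3) ^ ?N"
  have c1: "c1 \<ge> 0" unfolding c1_def using C0nn by simp
  define K1 where "K1 = c1 * (2 * 4 ^ CARD('n))"
  have K1: "K1 \<ge> 0" unfolding K1_def using c1 by simp
  have near: "\<bar>?fd z (axis j 1)\<bar> \<le> K1" if z: "norm z < 1/2" for z j
  proof -
    let ?v = "axis j (1::real)"
    let ?S = "lattice - {0::real^'n}"
    let ?M = "\<lambda>a. c1 / (1 + linf (a - 0)) ^ ?N"
    have SL: "?S \<subseteq> lattice" by auto
    have sm: "(\<lambda>a. \<mu> (z + t *\<^sub>R ?v - a)) summable_on ?S" for t
      using summable_on_subset_banach[OF has_sum_imp_summable[OF pou[of "z + t *\<^sub>R ?v"]] SL] .
    have bnd: "\<bar>?fd (z + t *\<^sub>R ?v - a) ?v\<bar> \<le> ?M a" if a: "a \<in> ?S" and t: "\<bar>t\<bar> \<le> 1/8" for a t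
    proof -
      let ?u = "z + t *\<^sub>R ?v - a"
      have na: "norm a \<ge> 1" using lattice_nonzero_norm a by blast
      have nw: "norm (z + t *\<^sub>R ?v) \<le> 5/8"
        using norm_triangle_ineq[of z "t *\<^sub>R ?v"] norm_axis_scale[of t j] z t by linarith
      have "norm a - norm (z + t *\<^sub>R ?v) \<le> norm (a - (z + t *\<^sub>R ?v))" by (rule norm_triangle_ineq2)
      also have "norm (a - (z + t *\<^sub>R ?v)) = norm ?u" by (simp add: norm_minus_commute)
      finally have nu: "norm a - 5/8 \<le> norm ?u" using nw by linarith
      have q: "1/4 \<le> norm ?u" using nu na by linarith
      have gf: "\<bar>?fd ?u ?v\<bar> \<le> C0 * 5 ^ ?N / (1 + norm ?u) ^ ?N"
        by (rule grad_far[OF diff C0 C0nn q])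
      have la: "linf a \<le> norm a" by (rule linf_le_norm)
      have dd: "(3/8) * (1 + linf a) = 3/8 + (3/8) * linf a" by (simp add: algebra_simps)
      have "(3/8) * (1 + linf a) \<le> 1 + norm ?u" unfolding dd using nu la linf_nonneg[of a] by linarith
      then have pw: "((3/8) * (1 + linf a)) ^ ?N \<le> (1 + norm ?u) ^ ?N"
        by (rule power_mono) (use linf_nonneg[of a] in simp)
      have pos1: "0 < (1 + linf a) ^ ?N" using linf_nonneg[of a] by simp
      have "C0 * 5 ^ ?N / (1 + norm ?u) ^ ?N \<le> C0 * 5 ^ ?N / ((3/8) * (1 + linf a)) ^ ?N"
      proof -
        have pa: "0 < (1 + norm ?u) ^ ?N" by (rule zero_less_power) (use norm_ge_zero[of ?u] in linarith)
        have pb: "0 < ((3/8) * (1 + linf a)) ^ ?N" by (rule zero_less_power) (use linf_nonneg[of a] in simp)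
        show ?thesis by (rule divide_left_mono[OF pw _ mult_pos_pos[OF pa pb]]) (use C0nn in simp)
      qed
      also have "\<dots> = c1 / (1 + linf a) ^ ?N"
      proof -
        have e1: "((3/8) * (1 + linf a)) ^ ?N = (3/8) ^ ?N * (1 + linf a) ^ ?N" by (simp only: power_mult_distrib)
        have e2: "(8/3::real) ^ ?N * (3/8) ^ ?N = 1" by (simp only: power_mult_distrib[symmetric]) simp
        have "C0 * 5 ^ ?N / ((3/8) ^ ?N * (1 + linf a) ^ ?N) = C0 * 5 ^ ?N * ((8/3) ^ ?N * (3/8) ^ ?N) / ((3/8) ^ ?N * (1 + linf a) ^ ?N)"
          unfolding e2 by simp
        also have "\<dots> = C0 * 5 ^ ?N * (8/3) ^ ?N / (1 + linf a) ^ ?N"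
          using pos1 by (simp add: field_simps)
        finally show ?thesis unfolding e1 c1_def .
      qed
      finally show ?thesis using gf by simp
    qed
    have smM: "?M summable_on ?S" by (rule wsum(1)[OF lattice_zero SL N2 c1])
    have sM: "(\<Sum>\<^sub>\<infinity>a\<in>?S. ?M a) \<le> K1" unfolding K1_def by (rule wsum(2)[OF lattice_zero SL N2 c1])
    have T: "((\<lambda>t. \<Sum>\<^sub>\<infinity>a\<in>?S. \<mu> (z + t *\<^sub>R ?v - a)) has_real_derivative
           (\<Sum>\<^sub>\<infinity>a\<in>?S. ?fd (z - a) ?v)) (at 0)"
      by (rule termwise[where \<delta>="1/8", OF diff sm _ bnd smM]) auto
    have eqf: "(\<lambda>t. \<mu> (z + t *\<^sub>R ?v)) = (\<lambda>t. 1 - (\<Sum>\<^sub>\<infinity>a\<in>?S. \<mu> (z + t *\<^sub>R ?v - a)))"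
      by (rule ext) (rule pou_split[OF pou])
    have D1: "((\<lambda>t. \<mu> (z + t *\<^sub>R ?v)) has_real_derivative (0 - (\<Sum>\<^sub>\<infinity>a\<in>?S. ?fd (z - a) ?v))) (at 0)"
      unfolding eqf by (rule DERIV_diff[OF DERIV_const T])
    have D2: "((\<lambda>t. \<mu> (z + t *\<^sub>R ?v)) has_real_derivative ?fd (z + 0 *\<^sub>R ?v) ?v) (at 0)"
      by (rule dir_deriv[OF diff])
    have "?fd z ?v = - (\<Sum>\<^sub>\<infinity>a\<in>?S. ?fd (z - a) ?v)" using DERIV_unique[OF D2 D1] by simp
    moreover have "\<bar>\<Sum>\<^sub>\<infinity>a\<in>?S. ?fd (z - a) ?v\<bar> \<le> (\<Sum>\<^sub>\<infinity>a\<in>?S. ?M a)"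
      by (rule real_summable_dom(2)[OF smM]) (use bnd[of _ 0] in simp)
    ultimately show ?thesis using sM by (simp only: abs_minus_cancel)
  qed
  define K where "K = C0 * 5 ^ ?N + K1 * (3/2) ^ ?N + 1"
  have Kpos: "K > 0" unfolding K_def using C0nn K1 by (simp add: add_nonneg_pos)
  have "\<bar>?fd z (axis j 1)\<bar> \<le> K / (1 + norm z) ^ ?N" for j z
  proof (cases "norm z < 1/2")
    case True
    have pw: "(1 + norm z) ^ ?N \<le> (3/2) ^ ?N" by (rule power_mono) (use True in auto)
    have pos: "0 < (1 + norm z) ^ ?N" by (rule zero_less_power) (use norm_ge_zero[of z] in linarith)
    have "K1 = K1 * (3/2) ^ ?N / (3/2) ^ ?N" by simp
    also have "\<dots> \<le> K1 * (3/2) ^ ?N / (1 + norm z) ^ ?N"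
      by (rule divide_left_mono[OF pw]) (use K1 pos in \<open>auto intro!: mult_pos_pos\<close>)
    also have "\<dots> \<le> K / (1 + norm z) ^ ?N"
      by (rule divide_right_mono) (use C0nn pos in \<open>auto simp: K_def\<close>)
    finally show ?thesis using near[OF True, of j] by linarith
  next
    case False
    then have q: "1/4 \<le> norm z" by linarith
    have "\<bar>?fd z (axis j 1)\<bar> \<le> C0 * 5 ^ ?N / (1 + norm z) ^ ?N"
      by (rule grad_far[OF diff C0 C0nn q])
    also have "\<dots> \<le> K / (1 + norm z) ^ ?N"
      by (rule divide_right_mono) (use K1 in \<open>auto simp: K_def\<close>)
    finally show ?thesis .
  qed
  then show ?thesis using Kpos by blast
qed

lemma round_point:
  fixes x :: "real^'n"
  defines "p \<equiv> (\<chi> k. real_of_int (round (x$k)))"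
  shows "p \<in> lattice" "linf (x - p) \<le> 1/2"
proof -
  show "p \<in> lattice" unfolding p_def lattice_def by auto
  show "linf (x - p) \<le> 1/2"
  proof (rule linf_le)
    fix k show "\<bar>(x - p)$k\<bar> \<le> 1/2" unfolding p_def
      using of_int_round_abs_le[of "x$k"] by (simp add: abs_minus_commute)
  qed
qed

lemma linf_scale_axis: "linf (t *\<^sub>R axis j (1::real)) \<le> \<bar>t\<bar>"
  using linf_le_norm[of "t *\<^sub>R axis j (1::real)"] norm_axis_scale[of t j] by simp

lemma lbdry_lattice: "A \<subseteq> lattice \<Longrightarrow> lbdry A \<subseteq> lattice"
  unfolding lbdry_def plusH_def Hcube_def using lattice_add by blast

lemma mem_lbdry:
  assumes "v \<in> A" "u \<notin> A" "u \<in> lattice" "v \<in> lattice" "linf (u - v) \<le> 1"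
  shows "u \<in> lbdry A"
proof -
  have "u - v \<in> Hcube" unfolding Hcube_def
    using lattice_diff[OF assms(3,4)] linf_ge[of "u - v"] assms(5) by (auto intro: order_trans)
  moreover have "u = v + (u - v)" by simp
  ultimately have "u \<in> plusH A" unfolding plusH_def using assms(1) by blast
  then show ?thesis unfolding lbdry_def using assms(2) by blast
qed

lemma lower_to_w:
  fixes \<mu> :: "real^'n \<Rightarrow> real"
  assumes c: "c > 0" "\<And>x. \<mu> x \<ge> c * (1 + norm x) powr (- 10 * real CARD('n))"
    and xp: "linf (x - p) \<le> 1/2"
  shows "1 / (1 + linf (e - p)) ^ (10 * CARD('n)) \<le> ((2 * real CARD('n)) ^ (10 * CARD('n)) / c) * \<mu> (x - e)"
proof -
  let ?a = "10 * CARD('n)"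
  let ?d = "real CARD('n)"
  let ?l = "linf (e - p)"
  have d1: "?d \<ge> 1" using card_pos[where 'n='n] by simp
  have l0: "?l \<ge> 0" by (rule linf_nonneg)
  have n0: "1 + norm (x - e) > 0" using norm_ge_zero[of "x-e"] by linarith
  have "(1 + norm (x - e)) powr (- 10 * real CARD('n)) = (1 + norm (x - e)) powr (- real ?a)" by simp
  also have "\<dots> = inverse ((1 + norm (x - e)) powr real ?a)" by (rule powr_minus)
  also have "(1 + norm (x - e)) powr real ?a = (1 + norm (x - e)) ^ ?a" by (rule powr_realpow[OF n0])
  finally have pw: "(1 + norm (x - e)) powr (- 10 * real CARD('n)) = 1 / (1 + norm (x - e)) ^ ?a"
    by (simp add: divide_inverse)
  have mu: "\<mu> (x - e) \<ge> c / (1 + norm (x - e)) ^ ?a" using c(2)[of "x - e"] unfolding pw by simp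
  have "norm (x - e) \<le> ?d * linf (x - e)" by (rule norm_le_linf)
  moreover have "linf (x - e) \<le> linf (x - p) + linf (p - e)" by (rule linf_diff_triangle)
  moreover have "linf (p - e) = ?l" by (rule linf_minus_commute)
  ultimately have "norm (x - e) \<le> ?d * (1/2 + ?l)"
    using xp d1 by (smt (verit) mult_left_mono)
  then have "norm (x - e) \<le> ?d / 2 + ?d * ?l" by (simp add: algebra_simps)
  moreover have "0 \<le> ?d * ?l" using d1 l0 by simp
  moreover have "(2 * ?d) * (1 + ?l) = 2 * ?d + 2 * (?d * ?l)" by (simp add: algebra_simps)
  ultimately have b: "1 + norm (x - e) \<le> (2 * ?d) * (1 + ?l)" using d1 by linarith
  have pw2: "(1 + norm (x - e)) ^ ?a \<le> ((2 * ?d) * (1 + ?l)) ^ ?a"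
    by (rule power_mono[OF b]) (use n0 in linarith)
  have pos: "0 < (1 + norm (x - e)) ^ ?a" using n0 by simp
  have posl: "0 < (1 + ?l) ^ ?a" using l0 by simp
  have posd: "0 < (2 * ?d) ^ ?a" using d1 by simp
  have "1 / (1 + ?l) ^ ?a = (2 * ?d) ^ ?a / ((2 * ?d) ^ ?a * (1 + ?l) ^ ?a)" using posd by simp
  also have "\<dots> = (2 * ?d) ^ ?a / ((2 * ?d) * (1 + ?l)) ^ ?a" by (simp only: power_mult_distrib)
  also have "\<dots> \<le> (2 * ?d) ^ ?a / (1 + norm (x - e)) ^ ?a"
    by (rule divide_left_mono[OF pw2]) (use posd pos posl in \<open>auto intro!: mult_pos_pos simp: power_mult_distrib\<close>)
  also have "\<dots> = ((2 * ?d) ^ ?a / c) * (c / (1 + norm (x - e)) ^ ?a)" using c(1) by simp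
  also have "\<dots> \<le> ((2 * ?d) ^ ?a / c) * \<mu> (x - e)"
    by (rule mult_left_mono[OF mu]) (use c(1) posd in simp)
  finally show ?thesis .
qed

theorem lemma1p3:
  fixes \<mu> :: "real^'n \<Rightarrow> real"
  assumes pos: "\<And>x. \<mu> x > 0"
    and diff: "\<And>x. \<mu> differentiable (at x)"
    and loc: "localized \<mu>"
    and pou: "\<And>x. ((\<lambda>a. \<mu> (x - a)) has_sum 1) lattice"
    and lower: "\<exists>c>0. \<forall>x. \<mu> x \<ge> c * (1 + norm x) powr (- 10 * real CARD('n))"
  shows "\<exists>C>0. \<forall>A \<subseteq> lattice. \<forall>j x. \<exists>D.
           ((\<lambda>t. muset \<mu> A (x + t *\<^sub>R axis j 1)) has_real_derivative D) (at 0) \<and>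
           \<bar>D\<bar> \<le> C * muset \<mu> (lbdry A) x"
proof -
  let ?d = "CARD('n)"
  let ?N = "10 * ?d + 1"
  let ?\<alpha> = "10 * ?d"
  let ?fd = "\<lambda>z. frechet_derivative \<mu> (at z)"
  obtain C0 where C0all: "\<And>x. \<bar>\<mu> x\<bar> \<le> C0 \<and>
      (x \<noteq> 0 \<longrightarrow> \<bar>\<mu> x\<bar> \<le> C0 * norm x powr (- 10 * real CARD('n))) \<and>
      (x \<noteq> 0 \<longrightarrow> onorm (frechet_derivative \<mu> (at x)) \<le> C0 * norm x powr (- 10 * real CARD('n) - 1))"
    using loc unfolding localized_def by blast
  have C0nn: "0 \<le> C0" using C0all[of 0] abs_ge_zero order_trans by blast
  have C0: "\<And>x. x \<noteq> 0 \<Longrightarrow> onorm (?fd x) \<le> C0 * norm x powr (- 10 * real CARD('n) - 1)"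
    using C0all by blast
  obtain K where K: "K > 0" "\<And>j z. \<bar>?fd z (axis j 1)\<bar> \<le> K / (1 + norm z) ^ ?N"
    using grad_bound[OF diff pou C0 C0nn] by blast
  obtain c where c: "c > 0" "\<And>x. \<mu> x \<ge> c * (1 + norm x) powr (- 10 * real CARD('n))"
    using lower by blast
  have d1: "real ?d \<ge> 1" using card_pos[where 'n='n] by simp
  define CE where "CE = (2 * real ?d) ^ ?\<alpha> / c"
  have CE: "CE > 0" unfolding CE_def using c(1) d1 by simp
  define KK where "KK = K * 4 ^ ?N"
  have KK: "KK > 0" unfolding KK_def using K(1) by simp
  define C where "C = KK * (2 * 4 ^ ?d) * CE"
  have Cpos: "C > 0" unfolding C_def using KK CE by simp
  have cp: "?d \<ge> 1" by (rule card_pos)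
  have N2: "?N \<ge> ?d + 2" using cp by linarith
  have N3: "?N \<ge> ?d + 3" using cp by linarith
  show ?thesis
  proof (rule exI[of _ C], intro conjI allI impI)
    show "C > 0" by (rule Cpos)
    fix A :: "(real^'n) set" and j :: 'n and x :: "real^'n" assume A: "A \<subseteq> lattice"
    let ?v = "axis j (1::real)"
    define p where "p = (\<chi> k. real_of_int (round (x$k)))"
    have p: "p \<in> lattice" "linf (x - p) \<le> 1/2" unfolding p_def by (rule round_point)+
    let ?M = "\<lambda>a. KK / (1 + linf (a - p)) ^ ?N"
    let ?w = "\<lambda>a. 1 / (1 + linf (a - p)) ^ ?N"
    have Mw: "?M a = KK * ?w a" for a by simp
    have bnd: "\<bar>?fd (x + t *\<^sub>R ?v - a) ?v\<bar> \<le> ?M a" if t: "\<bar>t\<bar> \<le> 1/4" for a t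
    proof -
      let ?u = "x + t *\<^sub>R ?v - a"
      have l1: "linf (a - p) \<le> linf (a - (x + t *\<^sub>R ?v)) + linf ((x + t *\<^sub>R ?v) - p)"
        by (rule linf_diff_triangle)
      have l2: "linf (a - (x + t *\<^sub>R ?v)) \<le> norm ?u"
        using linf_le_norm[of ?u] linf_minus_commute[of a "x + t *\<^sub>R ?v"] by simp
      have "(x + t *\<^sub>R ?v) - p = (x - p) + t *\<^sub>R ?v" by (simp add: algebra_simps)
      then have l3: "linf ((x + t *\<^sub>R ?v) - p) \<le> linf (x - p) + linf (t *\<^sub>R ?v)"
        using linf_triangle by metis
      have l4: "linf (t *\<^sub>R ?v) \<le> 1/4" using linf_scale_axis[of t j] t by linarith
      have L: "linf (a - p) \<le> norm ?u + 3/4" using l1 l2 l3 l4 p(2) by linarith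
      have L0: "linf (a - p) \<ge> 0" by (rule linf_nonneg)
      have dd: "(1/4) * (1 + linf (a - p)) = 1/4 + (1/4) * linf (a - p)" by (simp add: algebra_simps)
      have b: "(1/4) * (1 + linf (a - p)) \<le> 1 + norm ?u" unfolding dd using L L0 by linarith
      have pw: "((1/4) * (1 + linf (a - p))) ^ ?N \<le> (1 + norm ?u) ^ ?N"
        by (rule power_mono[OF b]) (use L0 in simp)
      have pa: "0 < (1 + norm ?u) ^ ?N" by (rule zero_less_power) (use norm_ge_zero[of ?u] in linarith)
      have pb: "0 < ((1/4) * (1 + linf (a - p))) ^ ?N" by (rule zero_less_power) (use L0 in simp)
      have "\<bar>?fd ?u ?v\<bar> \<le> K / (1 + norm ?u) ^ ?N" by (rule K(2))
      also have "\<dots> \<le> K / ((1/4) * (1 + linf (a - p))) ^ ?N"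
        by (rule divide_left_mono[OF pw _ mult_pos_pos[OF pa pb]]) (use K(1) in simp)
      also have "\<dots> = ?M a"
      proof -
        have e1: "((1/4) * (1 + linf (a - p))) ^ ?N = (1/4) ^ ?N * (1 + linf (a - p)) ^ ?N"
          by (simp only: power_mult_distrib)
        have e2: "(4::real) ^ ?N * (1/4) ^ ?N = 1" by (simp only: power_mult_distrib[symmetric]) simp
        have pl: "0 < (1 + linf (a - p)) ^ ?N" using L0 by simp
        have "K / ((1/4) ^ ?N * (1 + linf (a - p)) ^ ?N) = K * (4 ^ ?N * (1/4) ^ ?N) / ((1/4) ^ ?N * (1 + linf (a - p)) ^ ?N)"
          unfolding e2 by simp
        also have "\<dots> = K * 4 ^ ?N / (1 + linf (a - p)) ^ ?N" using pl by (simp add: field_simps)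
        finally show ?thesis unfolding e1 KK_def .
      qed
      finally show ?thesis .
    qed
    have smM: "?M summable_on S" if "S \<subseteq> lattice" for S
      by (rule wsum(1)[OF p(1) that N2]) (use KK in simp)
    have smu: "(\<lambda>a. \<mu> (x + t *\<^sub>R ?v - a)) summable_on S" if "S \<subseteq> lattice" for S t
      using summable_on_subset_banach[OF has_sum_imp_summable[OF pou[of "x + t *\<^sub>R ?v"]] that] .
    have smg: "(\<lambda>a. ?fd (x - a) ?v) summable_on S" if "S \<subseteq> lattice" for S
      by (rule real_summable_dom(1)[OF smM[OF that]]) (use bnd[of 0] in simp)
    have Tg: "((\<lambda>t. \<Sum>\<^sub>\<infinity>a\<in>S. \<mu> (x + t *\<^sub>R ?v - a)) has_real_derivative
           (\<Sum>\<^sub>\<infinity>a\<in>S. ?fd (x - a) ?v)) (at 0)" if S: "S \<subseteq> lattice" for S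
      by (rule termwise[where \<delta>="1/4", OF diff smu[OF S] _ bnd smM[OF S]]) auto
    define D where "D = (\<Sum>\<^sub>\<infinity>a\<in>A. ?fd (x - a) ?v)"
    have eqm: "(\<lambda>t. muset \<mu> A (x + t *\<^sub>R ?v)) = (\<lambda>t. \<Sum>\<^sub>\<infinity>a\<in>A. \<mu> (x + t *\<^sub>R ?v - a))"
      unfolding muset_def by simp
    have derD: "((\<lambda>t. muset \<mu> A (x + t *\<^sub>R ?v)) has_real_derivative D) (at 0)"
      unfolding eqm D_def by (rule Tg[OF A])
    let ?E = "lbdry A"
    have EL: "?E \<subseteq> lattice" by (rule lbdry_lattice[OF A])
    have iso: "(\<Sum>\<^sub>\<infinity>a\<in>B. ?w a) \<le> 2 * 4 ^ ?d * (\<Sum>\<^sub>\<infinity>e\<in>?E. 1 / (1 + linf (e - p)) ^ ?\<alpha>)"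
      if B: "B \<subseteq> lattice" "p \<notin> B"
        and nb: "\<And>u v. u \<in> lattice \<Longrightarrow> v \<in> lattice \<Longrightarrow> u \<notin> B \<Longrightarrow> v \<in> B \<Longrightarrow> linf (u - v) \<le> 1 \<Longrightarrow> u \<in> ?E \<or> v \<in> ?E"
      for B
      using iso_lemma[OF B(1) EL p(1) B(2) nb N3] by simp
    have Bbound: "\<bar>D\<bar> \<le> KK * (\<Sum>\<^sub>\<infinity>a\<in>B. ?w a)"
      if B: "B \<subseteq> lattice" and DB: "\<bar>D\<bar> = \<bar>\<Sum>\<^sub>\<infinity>a\<in>B. ?fd (x - a) ?v\<bar>" for B
    proof -
      have "\<bar>\<Sum>\<^sub>\<infinity>a\<in>B. ?fd (x - a) ?v\<bar> \<le> (\<Sum>\<^sub>\<infinity>a\<in>B. ?M a)"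
        by (rule real_summable_dom(2)[OF smM[OF B]]) (use bnd[of 0] in simp)
      also have "(\<Sum>\<^sub>\<infinity>a\<in>B. ?M a) = KK * (\<Sum>\<^sub>\<infinity>a\<in>B. ?w a)"
        unfolding Mw by (rule infsum_cmult_right')
      finally show ?thesis using DB by simp
    qed
    have main: "\<bar>D\<bar> \<le> KK * (2 * 4 ^ ?d * (\<Sum>\<^sub>\<infinity>e\<in>?E. 1 / (1 + linf (e - p)) ^ ?\<alpha>))"
    proof (cases "p \<in> A")
      case False
      have "(\<Sum>\<^sub>\<infinity>a\<in>A. ?w a) \<le> 2 * 4 ^ ?d * (\<Sum>\<^sub>\<infinity>e\<in>?E. 1 / (1 + linf (e - p)) ^ ?\<alpha>)"
      proof (rule iso[OF A False])
        fix u v assume "u \<in> lattice" "v \<in> lattice" "u \<notin> A" "v \<in> A" "linf (u - v) \<le> 1"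
        then show "u \<in> ?E \<or> v \<in> ?E" using mem_lbdry by blast
      qed
      then show ?thesis using Bbound[OF A] D_def KK by (meson mult_left_mono less_imp_le order_trans)
    next
      case True
      let ?B = "lattice - A"
      have BL: "?B \<subseteq> lattice" by auto
      have Z: "(\<Sum>\<^sub>\<infinity>a\<in>lattice. ?fd (x - a) ?v) = 0"
      proof -
        have one: "(\<lambda>t. \<Sum>\<^sub>\<infinity>a\<in>lattice. \<mu> (x + t *\<^sub>R ?v - a)) = (\<lambda>t. 1)"
          using pou by (auto intro!: infsumI)
        have "((\<lambda>t. 1::real) has_real_derivative (\<Sum>\<^sub>\<infinity>a\<in>lattice. ?fd (x - a) ?v)) (at 0)"
          using Tg[of lattice] unfolding one by simp
        then show ?thesis using DERIV_const DERIV_unique by blast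
      qed
      have "(\<Sum>\<^sub>\<infinity>a\<in>A \<union> ?B. ?fd (x - a) ?v) = D + (\<Sum>\<^sub>\<infinity>a\<in>?B. ?fd (x - a) ?v)"
        unfolding D_def by (rule infsum_Un_disjoint[OF smg[OF A] smg[OF BL]]) auto
      moreover have "A \<union> ?B = lattice" using A by auto
      ultimately have "\<bar>D\<bar> = \<bar>\<Sum>\<^sub>\<infinity>a\<in>?B. ?fd (x - a) ?v\<bar>" using Z by simp
      then have b1: "\<bar>D\<bar> \<le> KK * (\<Sum>\<^sub>\<infinity>a\<in>?B. ?w a)" by (rule Bbound[OF BL])
      have "(\<Sum>\<^sub>\<infinity>a\<in>?B. ?w a) \<le> 2 * 4 ^ ?d * (\<Sum>\<^sub>\<infinity>e\<in>?E. 1 / (1 + linf (e - p)) ^ ?\<alpha>)"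
      proof (rule iso[OF BL])
        show "p \<notin> ?B" using True by simp
        fix u v assume uv: "u \<in> lattice" "v \<in> lattice" "u \<notin> ?B" "v \<in> ?B" "linf (u - v) \<le> 1"
        have "v \<in> ?E" by (rule mem_lbdry) (use uv linf_minus_commute[of u v] in auto)
        then show "u \<in> ?E \<or> v \<in> ?E" by blast
      qed
      then show ?thesis using b1 KK by (meson mult_left_mono less_imp_le order_trans)
    qed
    have smW: "(\<lambda>e. 1 / (1 + linf (e - p)) ^ ?\<alpha>) summable_on ?E"
      using lattice_summable(1)[OF p(1) EL, of ?\<alpha>] d1 by simp
    have smE: "(\<lambda>e. CE * \<mu> (x - e)) summable_on ?E"
      by (rule summable_on_cmult_right) (rule summable_on_subset_banach[OF has_sum_imp_summable[OF pou[of x]] EL])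
    have "(\<Sum>\<^sub>\<infinity>e\<in>?E. 1 / (1 + linf (e - p)) ^ ?\<alpha>) \<le> (\<Sum>\<^sub>\<infinity>e\<in>?E. CE * \<mu> (x - e))"
      by (rule infsum_mono[OF smW smE]) (unfold CE_def, rule lower_to_w[OF c p(2)])
    also have "\<dots> = CE * muset \<mu> ?E x" unfolding muset_def by (rule infsum_cmult_right')
    finally have "KK * (2 * 4 ^ ?d * (\<Sum>\<^sub>\<infinity>e\<in>?E. 1 / (1 + linf (e - p)) ^ ?\<alpha>)) \<le> KK * (2 * 4 ^ ?d * (CE * muset \<mu> ?E x))"
      using KK by (intro mult_left_mono) auto
    then have "\<bar>D\<bar> \<le> KK * (2 * 4 ^ ?d * (CE * muset \<mu> ?E x))" by (rule order_trans[OF main])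
    moreover have "KK * (2 * 4 ^ ?d * (CE * muset \<mu> ?E x)) = C * muset \<mu> ?E x"
      unfolding C_def by (simp only: mult.assoc)
    ultimately have "\<bar>D\<bar> \<le> C * muset \<mu> ?E x" by simp
    then show "\<exists>D. ((\<lambda>t. muset \<mu> A (x + t *\<^sub>R axis j 1)) has_real_derivative D) (at 0) \<and>
           \<bar>D\<bar> \<le> C * muset \<mu> (lbdry A) x" using derD by blast
  qed
qed

end
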